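(* Let $\mathcal{I}$ be a countable nonempty set of database instances, $\mathcal{L}$ a query language, and $p$ an answer-dependent pricing function. The following two statements are equivalent: (1) $p$ has no information arbitrage; (2) there is a set function $f$, defined on subsets of $\mathcal{I}$ and taking nonnegative real values, such that $p(\mathbf{Q},E)=f(\overline{\mathcal{S}}_{\mathbf{Q}}(E))$ for every query bundle $\mathbf{Q}\in B(\mathcal{L})$ and every $E\in\{\mathbf{Q}(D):D\in\mathcal{I}\}$, and $f$ is monotone over every semilattice $\mathcal{S}^{\mathcal{L}}_D$, $D\in\mathcal{I}$.
   Context: A query is a deterministic function on $\mathcal{I}$. A query bundle $\mathbf{Q}=(Q_1,\dots,Q_n)$ is a finite tuple of queries from $\mathcal{L}$, with $\mathbf{Q}(D)=(Q_1(D),\dots,Q_n(D))$; $B(\mathcal{L})$ is the set of all finite query bundles, and for $\mathbf{Q}_1,\mathbf{Q}_2\in B(\mathcal{L})$ their union (concatenation) $\mathbf{Q}_1,\mathbf{Q}_2$ is again in $B(\mathcal{L})$. An answer-dependent pricing function assigns a price $p(\mathbf{Q},E)\ge 0$ to each $\mathbf{Q}\in B(\mathcal{L})$ and each $E\in\{\mathbf{Q}(D):D\in\mathcal{I}\}$. For $D\in\mathcal{I}$ write $D\vdash \mathbf{Q}_2\twoheadrightarrow\mathbf{Q}_1$ if for every $D'\in\mathcal{I}$ with $\mathbf{Q}_2(D')=\mathbf{Q}_2(D)$ we have $\mathbf{Q}_1(D')=\mathbf{Q}_1(D)$. $p$ has no information arbitrage if for every $D\in\mathcal{I}$ and all $\mathbf{Q}_1,\mathbf{Q}_2\in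 B(\mathcal{L})$, $D\vdash \mathbf{Q}_2\twoheadrightarrow\mathbf{Q}_1$ implies $p(\mathbf{Q}_2,\mathbf{Q}_2(D))\ge p(\mathbf{Q}_1,\mathbf{Q}_1(D))$. The conflict set is $\overline{\mathcal{S}}_{\mathbf{Q}}(E)=\{D'\in\mathcal{I}:\mathbf{Q}(D')\neq E\}$. For $D\in\mathcal{I}$, $\mathcal{S}^{\mathcal{L}}_D=\{\overline{\mathcal{S}}_{\mathbf{Q}}(\mathbf{Q}(D)):\mathbf{Q}\in B(\mathcal{L})\}$, partially ordered by inclusion (a join-semilattice with join $\cup$). $f$ is monotone over $\mathcal{S}^{\mathcal{L}}_D$ if $A\subseteq B$ with $A,B\in\mathcal{S}^{\mathcal{L}}_D$ implies $f(A)\le f(B)$. *)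

theory Defs
  imports Complex_Main "HOL-Library.Countable_Set"
begin

text \<open>A query is a function
 'i => 'a (only its values on I matter); a query language L is a set of queries.
 A query bundle is a finite list of queries from L; concatenation is list append.\<close>

definition bundles :: "('i \<Rightarrow> 'a) set \<Rightarrow> ('i \<Rightarrow> 'a) list set" where
  "bundles L = {Q. set Q \<subseteq> L}"

definition eval_bundle :: "('i \<Rightarrow> 'a) list \<Rightarrow> 'i \<Rightarrow> 'a list" where
  "eval_bundle Q D = map (\<lambda>q. q D) Q"

definition determines :: "'i set \<Rightarrow> 'i \<Rightarrow> ('i \<Rightarrow> 'a) list \<Rightarrow> ('i \<Rightarrow> 'a) list \<Rightarrow> bool" where
  "determines I D Q2 Q1 \<longleftrightarrow>
     (\<forall>D'\<in>I. eval_bundle Q2 D' = eval_bundle Q2 D \<longrightarrow> eval_bundle Q1 D' = eval_bundle Q1 D)"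

definition no_info_arbitrage ::
  "'i set \<Rightarrow> ('i \<Rightarrow> 'a) set \<Rightarrow> (('i \<Rightarrow> 'a) list \<Rightarrow> 'a list \<Rightarrow> real) \<Rightarrow> bool" where
  "no_info_arbitrage I L p \<longleftrightarrow>
     (\<forall>D\<in>I. \<forall>Q1\<in>bundles L. \<forall>Q2\<in>bundles L.
        determines I D Q2 Q1 \<longrightarrow> p Q2 (eval_bundle Q2 D) \<ge> p Q1 (eval_bundle Q1 D))"

definition conflict_set :: "'i set \<Rightarrow> ('i \<Rightarrow> 'a) list \<Rightarrow> 'a list \<Rightarrow> 'i set" where
  "conflict_set I Q E = {D'\<in>I. eval_bundle Q D' \<noteq> E}"

definition semilat :: "'i set \<Rightarrow> ('i \<Rightarrow> 'a) set \<Rightarrow> 'i \<Rightarrow> 'i set set" where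
  "semilat I L D = {conflict_set I Q (eval_bundle Q D) | Q. Q \<in> bundles L}"

definition monotone_over :: "('i set \<Rightarrow> real) \<Rightarrow> 'i set set \<Rightarrow> bool" where
  "monotone_over f S \<longleftrightarrow> (\<forall>A\<in>S. \<forall>B\<in>S. A \<subseteq> B \<longrightarrow> f A \<le> f B)"

definition pricing_function ::
  "'i set \<Rightarrow> ('i \<Rightarrow> 'a) set \<Rightarrow> (('i \<Rightarrow> 'a) list \<Rightarrow> 'a list \<Rightarrow> real) \<Rightarrow> bool" where
  "pricing_function I L p \<longleftrightarrow> (\<forall>Q\<in>bundles L. \<forall>D\<in>I. p Q (eval_bundle Q D) \<ge> 0)"

end

theory Submission
  imports Defs
begin

lemma det_iff:
  "D \<in> I \<Longrightarrow> determines I D Q2 Q1 \<longleftrightarrow>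
     conflict_set I Q1 (eval_bundle Q1 D) \<subseteq> conflict_set I Q2 (eval_bundle Q2 D)"
  unfolding determines_def conflict_set_def by blast

lemma wd:
  assumes na: "no_info_arbitrage I L p"
    and Q: "Q \<in> bundles L" "D \<in> I" and Q': "Q' \<in> bundles L" "D' \<in> I"
    and eq: "conflict_set I Q (eval_bundle Q D) = conflict_set I Q' (eval_bundle Q' D')"
  shows "p Q (eval_bundle Q D) = p Q' (eval_bundle Q' D')"
proof -
  have "D' \<notin> conflict_set I Q' (eval_bundle Q' D')" unfolding conflict_set_def by simp
  with eq Q' have e: "eval_bundle Q D' = eval_bundle Q D" unfolding conflict_set_def by auto
  have d1: "determines I D' Q Q'" using det_iff[OF Q'(2), of Q Q'] eq e by simp
  have d2: "determines I D' Q' Q" using det_iff[OF Q'(2), of Q' Q] eq e by simp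
  have "p Q (eval_bundle Q D') \<ge> p Q' (eval_bundle Q' D')"
    using na d1 Q Q' unfolding no_info_arbitrage_def by blast
  moreover have "p Q (eval_bundle Q D') \<le> p Q' (eval_bundle Q' D')"
    using na d2 Q Q' unfolding no_info_arbitrage_def by blast
  ultimately show ?thesis using e by simp
qed

theorem theorem1:
  fixes I :: "'i set" and L :: "('i \<Rightarrow> 'a) set"
    and p :: "('i \<Rightarrow> 'a) list \<Rightarrow> 'a list \<Rightarrow> real"
  assumes "countable I" and "I \<noteq> {}" and "pricing_function I L p"
  shows "no_info_arbitrage I L p \<longleftrightarrow>
    (\<exists>f :: 'i set \<Rightarrow> real.
        (\<forall>A. A \<subseteq> I \<longrightarrow> f A \<ge> 0) \<and>
        (\<forall>Q\<in>bundles L. \<forall>D\<in>I. p Q (eval_bundle Q D) = f (conflict_set I Q (eval_bundle Q D))) \<and>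
        (\<forall>D\<in>I. monotone_over f (semilat I L D)))"
proof
  assume na: "no_info_arbitrage I L p"
  define P where "P = (\<lambda>A X. fst X \<in> bundles L \<and> snd X \<in> I \<and>
       A = conflict_set I (fst X) (eval_bundle (fst X) (snd X)))"
  define f where "f = (\<lambda>A. if \<exists>X. P A X then
      p (fst (SOME X. P A X)) (eval_bundle (fst (SOME X. P A X)) (snd (SOME X. P A X))) else 0)"
  have fv: "f (conflict_set I Q (eval_bundle Q D)) = p Q (eval_bundle Q D)"
    if "Q \<in> bundles L" "D \<in> I" for Q D
  proof -
    let ?A = "conflict_set I Q (eval_bundle Q D)"
    have ex: "P ?A (Q, D)" using that unfolding P_def by simp
    hence s: "P ?A (SOME X. P ?A X)" by (rule someI)
    have "f ?A = p (fst (SOME X. P ?A X)) (eval_bundle (fst (SOME X. P ?A X)) (snd (SOME X. P ?A X)))"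
      using ex unfolding f_def by auto
    also have "\<dots> = p Q (eval_bundle Q D)"
    proof -
      define X where "X = (SOME X. P ?A X)"
      have sx: "fst X \<in> bundles L" "snd X \<in> I" "?A = conflict_set I (fst X) (eval_bundle (fst X) (snd X))"
        using s unfolding X_def P_def by auto
      show ?thesis unfolding X_def[symmetric]
        using wd[OF na sx(1,2) that sx(3)[symmetric]] .
    qed
    finally show ?thesis .
  qed
  show "\<exists>f :: 'i set \<Rightarrow> real.
        (\<forall>A. A \<subseteq> I \<longrightarrow> f A \<ge> 0) \<and>
        (\<forall>Q\<in>bundles L. \<forall>D\<in>I. p Q (eval_bundle Q D) = f (conflict_set I Q (eval_bundle Q D))) \<and>
        (\<forall>D\<in>I. monotone_over f (semilat I L D))"
  proof (intro exI conjI ballI allI impI)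
    fix A :: "'i set" assume "A \<subseteq> I"
    show "f A \<ge> 0"
    proof (cases "\<exists>X. P A X")
      case True
      then obtain X where "P A X" by blast
      hence s: "P A (SOME X. P A X)" by (rule someI)
      define Y where "Y = (SOME X. P A X)"
      have sy: "fst Y \<in> bundles L" "snd Y \<in> I" using s unfolding Y_def P_def by auto
      have "f A = p (fst Y) (eval_bundle (fst Y) (snd Y))" using True unfolding f_def Y_def by simp
      then show ?thesis using sy assms(3) unfolding pricing_function_def by simp
    next
      case False thus ?thesis unfolding f_def by simp
    qed
  next
    fix Q D assume "Q \<in> bundles L" "D \<in> I"
    thus "p Q (eval_bundle Q D) = f (conflict_set I Q (eval_bundle Q D))" using fv by simp
  next
    fix D assume D: "D \<in> I"
    show "monotone_over f (semilat I L D)"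
      unfolding monotone_over_def semilat_def
    proof (clarify)
      fix Q1 Q2 assume q: "Q1 \<in> bundles L" "Q2 \<in> bundles L"
        and sub: "conflict_set I Q1 (eval_bundle Q1 D) \<subseteq> conflict_set I Q2 (eval_bundle Q2 D)"
      have "determines I D Q2 Q1" using det_iff[OF D, of Q2 Q1] sub by simp
      hence "p Q2 (eval_bundle Q2 D) \<ge> p Q1 (eval_bundle Q1 D)"
        using na q D unfolding no_info_arbitrage_def by blast
      thus "f (conflict_set I Q1 (eval_bundle Q1 D)) \<le> f (conflict_set I Q2 (eval_bundle Q2 D))"
        using fv q D by simp
    qed
  qed
next
  assume "\<exists>f :: 'i set \<Rightarrow> real.
        (\<forall>A. A \<subseteq> I \<longrightarrow> f A \<ge> 0) \<and>
        (\<forall>Q\<in>bundles L. \<forall>D\<in>I. p Q (eval_bundle Q D) = f (conflict_set I Q (eval_bundle Q D))) \<and>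
        (\<forall>D\<in>I. monotone_over f (semilat I L D))"
  then obtain f :: "'i set \<Rightarrow> real" where
    h: "\<forall>Q\<in>bundles L. \<forall>D\<in>I. p Q (eval_bundle Q D) = f (conflict_set I Q (eval_bundle Q D))"
    and m: "\<forall>D\<in>I. monotone_over f (semilat I L D)" by blast
  show "no_info_arbitrage I L p"
    unfolding no_info_arbitrage_def
  proof (intro ballI impI)
    fix D Q1 Q2 assume D: "D \<in> I" and q: "Q1 \<in> bundles L" "Q2 \<in> bundles L"
      and d: "determines I D Q2 Q1"
    have sub: "conflict_set I Q1 (eval_bundle Q1 D) \<subseteq> conflict_set I Q2 (eval_bundle Q2 D)"
      using det_iff[OF D, of Q2 Q1] d by simp
    have in1: "conflict_set I Q1 (eval_bundle Q1 D) \<in> semilat I L D"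
      unfolding semilat_def using q by blast
    have in2: "conflict_set I Q2 (eval_bundle Q2 D) \<in> semilat I L D"
      unfolding semilat_def using q by blast
    have "f (conflict_set I Q1 (eval_bundle Q1 D)) \<le> f (conflict_set I Q2 (eval_bundle Q2 D))"
      using m D in1 in2 sub unfolding monotone_over_def by blast
    thus "p Q1 (eval_bundle Q1 D) \<le> p Q2 (eval_bundle Q2 D)" using h q D by simp
  qed
qed

end
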